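(* Let $n,m\ge 3$, let $G=(V,E)=P_n\square P_m$ be the grid graph, and let $R\subseteq V$. If every vertex of $G$ has a locally resolved neighbourhood with respect to $R$, then $R$ is a resolving set for $G$.
   Context: The grid graph $P_n\square P_m$ has vertex set $\{(i,j):0\le i\le n-1,\ 0\le j\le m-1\}$, with $(i,j)$ adjacent to $(k,l)$ iff $|i-k|+|j-l|=1$; the distance is $d((i,j),(k,l))=|i-k|+|j-l|$. A vertex $w$ resolves two vertices $u,v$ if $d(w,u)\ne d(w,v)$. A set $R$ is resolving if every pair of distinct vertices is resolved by some vertex of $R$. A vertex $x$ has a locally resolved neighbourhood with respect to $R$ if every pair of distinct neighbours of $x$ is resolved by some vertex of $R$. *)

theory Defs
  imports Main
begin

definition grid_vertices :: "nat \<Rightarrow> nat \<Rightarrow> (nat \<times> nat) set" where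
  "grid_vertices n m = {(i, j). i < n \<and> j < m}"

definition grid_dist :: "nat \<times> nat \<Rightarrow> nat \<times> nat \<Rightarrow> nat" where
  "grid_dist u v = nat \<bar>int (fst u) - int (fst v)\<bar> + nat \<bar>int (snd u) - int (snd v)\<bar>"

definition grid_adj :: "nat \<times> nat \<Rightarrow> nat \<times> nat \<Rightarrow> bool" where
  "grid_adj u v \<longleftrightarrow> grid_dist u v = 1"

definition grid_neighbours :: "nat \<Rightarrow> nat \<Rightarrow> nat \<times> nat \<Rightarrow> (nat \<times> nat) set" where
  "grid_neighbours n m x = {y \<in> grid_vertices n m. grid_adj x y}"

definition resolves :: "nat \<times> nat \<Rightarrow> nat \<times> nat \<Rightarrow> nat \<times> nat \<Rightarrow> bool" where
  "resolves w u v \<longleftrightarrow> grid_dist w u \<noteq> grid_dist w v"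

definition resolving_set :: "nat \<Rightarrow> nat \<Rightarrow> (nat \<times> nat) set \<Rightarrow> bool" where
  "resolving_set n m R \<longleftrightarrow> R \<subseteq> grid_vertices n m \<and>
     (\<forall>u \<in> grid_vertices n m. \<forall>v \<in> grid_vertices n m. u \<noteq> v \<longrightarrow> (\<exists>w \<in> R. resolves w u v))"

definition locally_resolved :: "nat \<Rightarrow> nat \<Rightarrow> (nat \<times> nat) set \<Rightarrow> nat \<times> nat \<Rightarrow> bool" where
  "locally_resolved n m R x \<longleftrightarrow>
     (\<forall>u \<in> grid_neighbours n m x. \<forall>v \<in> grid_neighbours n m x. u \<noteq> v \<longrightarrow> (\<exists>w \<in> R. resolves w u v))"

end

theory Submission
  imports Defs
begin

definition "D (a::int) b c d = \<bar>a - c\<bar> + \<bar>b - d\<bar>"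

definition goodw :: "int \<Rightarrow> int \<Rightarrow> int \<Rightarrow> int \<Rightarrow> int \<Rightarrow> int \<Rightarrow> int \<Rightarrow> int \<Rightarrow> int \<Rightarrow> int \<Rightarrow> int \<Rightarrow> int \<Rightarrow> bool" where
 "goodw n m a b c d x1 x2 p1 p2 q1 q2 \<longleftrightarrow>
   0 \<le> x1 \<and> x1 < n \<and> 0 \<le> x2 \<and> x2 < m \<and>
   0 \<le> p1 \<and> p1 < n \<and> 0 \<le> p2 \<and> p2 < m \<and>
   0 \<le> q1 \<and> q1 < n \<and> 0 \<le> q2 \<and> q2 < m \<and>
   D x1 x2 p1 p2 = 1 \<and> D x1 x2 q1 q2 = 1 \<and> (p1,p2) \<noteq> (q1,q2) \<and>
   (\<forall>w1 w2. D w1 w2 a b = D w1 w2 c d \<longrightarrow> D w1 w2 p1 p2 = D w1 w2 q1 q2)"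

lemma even_abs: "even (\<bar>t::int\<bar> + t)"
  by (cases "t \<ge> 0") auto

lemma parity:
  assumes "D w1 w2 a b = D w1 w2 c d"
  shows "even (a + b + c + d)"
proof -
  have "even ((\<bar>w1-a\<bar> + (w1-a)) + (\<bar>w2-b\<bar> + (w2-b)) + (\<bar>w1-c\<bar> + (w1-c)) + (\<bar>w2-d\<bar> + (w2-d)))"
    using even_abs by auto
  moreover have "(\<bar>w1-a\<bar> + (w1-a)) + (\<bar>w2-b\<bar> + (w2-b)) + (\<bar>w1-c\<bar> + (w1-c)) + (\<bar>w2-d\<bar> + (w2-d))
     = 2 * (D w1 w2 a b + w1 + w2) - (a+b+c+d)"
    using assms unfolding D_def by simp
  ultimately show ?thesis by presburger
qed

lemma key:
  fixes n m a b c d :: int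
  assumes "(a,b) \<noteq> (c,d)" "a \<le> c" "0 \<le> a" "0 \<le> b" "0 \<le> d" "c < n" "b < m" "d < m"
    "3 \<le> n" "3 \<le> m"
  shows "\<exists>x1 x2 p1 p2 q1 q2. goodw n m a b c d x1 x2 p1 p2 q1 q2"
proof (cases "even (a+b+c+d)")
  case False
  have "goodw n m a b c d 1 1 0 1 2 1"
  proof -
    have noeq: "\<forall>w1 w2. D w1 w2 a b \<noteq> D w1 w2 c d" using parity False by blast
    show ?thesis using noeq assms unfolding goodw_def by (auto simp: D_def[of 1 1])
  qed
  then show ?thesis by blast
next
  case True
  then obtain k where k: "a+b+c+d = 2*k" by (metis evenE)
  consider "b \<le> d" "d - b \<le> c - a" "a < c" | "b \<le> d" "d - b > c - a"
    | "b > d" "b - d \<le> c - a" | "b > d" "b - d > c - a"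
  proof -
    have "a \<noteq> c \<or> b \<noteq> d" using assms(1) by auto
    then show "(\<And>thesis. (b \<le> d \<Longrightarrow> d - b \<le> c - a \<Longrightarrow> a < c \<Longrightarrow> thesis) \<Longrightarrow> (b \<le> d \<Longrightarrow> d - b > c - a \<Longrightarrow> thesis) \<Longrightarrow> (b > d \<Longrightarrow> b - d \<le> c - a \<Longrightarrow> thesis) \<Longrightarrow> (b > d \<Longrightarrow> b - d > c - a \<Longrightarrow> thesis) \<Longrightarrow> thesis)"
      using assms(2) by linarith
  qed
  then show ?thesis
  proof cases
    case 1
    define i0 where "i0 = k - b"
    show ?thesis
    proof (cases "b = d")
      case True
      have "goodw n m a b c d i0 b (i0-1) b (i0+1) b"
        using assms 1 True k unfolding goodw_def i0_def D_def by (simp add: abs_if split: if_splits)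
      then show ?thesis by blast
    next
      case False
      have "goodw n m a b c d i0 b (i0-1) b i0 (b+1)"
        using assms 1 False k unfolding goodw_def i0_def D_def by (simp add: abs_if split: if_splits)
      then show ?thesis by blast
    qed
  next
    case 2
    define j0 where "j0 = k - a"
    show ?thesis
    proof (cases "a = c")
      case True
      have "goodw n m a b c d a j0 a (j0-1) a (j0+1)"
        using assms 2 True k unfolding goodw_def j0_def D_def by (simp add: abs_if split: if_splits)
      then show ?thesis by blast
    next
      case False
      have "goodw n m a b c d a j0 a (j0-1) (a+1) j0"
        using assms 2 False k unfolding goodw_def j0_def D_def by (simp add: abs_if split: if_splits)
      then show ?thesis by blast
    qed
  next
    case 3
    define i0 where "i0 = k - d"
    have "goodw n m a b c d i0 b (i0-1) b i0 (b-1)"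
      using assms 3 k unfolding goodw_def i0_def D_def by (simp add: abs_if split: if_splits)
    then show ?thesis by blast
  next
    case 4
    define j0 where "j0 = k - c"
    show ?thesis
    proof (cases "a = c")
      case True
      have "goodw n m a b c d a j0 a (j0-1) a (j0+1)"
        using assms 4 True k unfolding goodw_def j0_def D_def by (simp add: abs_if split: if_splits)
      then show ?thesis by blast
    next
      case False
      have "goodw n m a b c d a j0 a (j0+1) (a+1) j0"
        using assms 4 False k unfolding goodw_def j0_def D_def by (simp add: abs_if split: if_splits)
      then show ?thesis by blast
    qed
  qed
qed
lemma gd_D: "grid_dist u v = nat (D (int (fst u)) (int (snd u)) (int (fst v)) (int (snd v)))"
  unfolding grid_dist_def D_def by simp

lemma D_nonneg: "0 \<le> D a b c d" unfolding D_def by simp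

lemma pair_case:
  fixes n m :: nat and R :: "(nat \<times> nat) set"
  assumes "n \<ge> 3" and "m \<ge> 3"
    and "R \<subseteq> grid_vertices n m"
    and "\<forall>x \<in> grid_vertices n m. locally_resolved n m R x"
    and "(a,b) \<in> grid_vertices n m" "(c,d) \<in> grid_vertices n m" "(a,b) \<noteq> (c,d)" "a \<le> c"
  shows "\<exists>w\<in>R. resolves w (a,b) (c,d)"
proof -
  have "(int a, int b) \<noteq> (int c, int d)" using assms(7) by auto
  then obtain x1 x2 p1 p2 q1 q2 where g: "goodw (int n) (int m) (int a) (int b) (int c) (int d) x1 x2 p1 p2 q1 q2"
    using key[of "int a" "int b" "int c" "int d" "int n" "int m"] assms
    by (auto simp: grid_vertices_def)
  define x where "x = (nat x1, nat x2)"
  define p where "p = (nat p1, nat p2)"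
  define q where "q = (nat q1, nat q2)"
  have xV: "x \<in> grid_vertices n m" using g unfolding goodw_def x_def grid_vertices_def by auto
  have pN: "p \<in> grid_neighbours n m x" using g unfolding goodw_def x_def p_def grid_neighbours_def grid_vertices_def grid_adj_def gd_D
    by auto
  have qN: "q \<in> grid_neighbours n m x" using g unfolding goodw_def x_def q_def grid_neighbours_def grid_vertices_def grid_adj_def gd_D
    by auto
  have pq: "p \<noteq> q" using g unfolding goodw_def p_def q_def by auto
  obtain w where w: "w \<in> R" "resolves w p q"
    using assms(4) xV pN qN pq unfolding locally_resolved_def by blast
  obtain w1 w2 where ww: "w = (w1,w2)" by (cases w)
  have "D (int w1) (int w2) p1 p2 \<noteq> D (int w1) (int w2) q1 q2"
    using w(2) g unfolding resolves_def ww p_def q_def gd_D goodw_def by auto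
  then have "D (int w1) (int w2) (int a) (int b) \<noteq> D (int w1) (int w2) (int c) (int d)"
    using g unfolding goodw_def by blast
  then have "resolves w (a,b) (c,d)"
    unfolding resolves_def ww gd_D using D_nonneg by (simp add: eq_nat_nat_iff)
  then show ?thesis using w(1) by blast
qed

theorem theorem3:
  fixes n m :: nat and R :: "(nat \<times> nat) set"
  assumes "n \<ge> 3" and "m \<ge> 3"
    and "R \<subseteq> grid_vertices n m"
    and "\<forall>x \<in> grid_vertices n m. locally_resolved n m R x"
  shows "resolving_set n m R"
  unfolding resolving_set_def
proof (intro conjI ballI impI)
  show "R \<subseteq> grid_vertices n m" by fact
  fix u v assume uv: "u \<in> grid_vertices n m" "v \<in> grid_vertices n m" "u \<noteq> v"
  obtain a b where u: "u = (a,b)" by (cases u)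
  obtain c d where v: "v = (c,d)" by (cases v)
  show "\<exists>w\<in>R. resolves w u v"
  proof (cases "a \<le> c")
    case True
    then show ?thesis using pair_case[OF assms, of a b c d] uv u v by auto
  next
    case False
    then have "\<exists>w\<in>R. resolves w v u" using pair_case[OF assms, of c d a b] uv u v by auto
    then show ?thesis unfolding resolves_def by metis
  qed
qed

end
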